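(* Let $(y_k)_{k\in\mathbb{N}}$ be a sequence in $\mathbb{W}$ with $y_k\in\mathbb{W}_{N(y_k)}$ and $N(y_k)\to\infty$. Let $(\mu,\nu)$ be a pair of diffuse probability measures on $[0,1]$ with $\frac12(\mu+\nu)=\lambda$ (Lebesgue measure on $[0,1]$), and let $y$ be the point of the Doob--Martin boundary corresponding to $(\mu,\nu)$. Then $y_k\to y$ in the Doob--Martin topology if and only if \[ \lim_{k\to\infty}\frac{\binom{y_k}{w}}{\binom{N(y_k)}{m}^2} = \mu^{\otimes m}\otimes\nu^{\otimes m}(\mathcal{S}(w)) \] for all $w\in\mathbb{W}_m$ and all $m\in\mathbb{N}$. Equivalently, $y_k\to y$ if and only if for each $m\in\mathbb{N}$ the random word in $\mathbb{W}_m$ obtained by selecting $m$ letters $a$ and $m$ letters $b$ uniformly at random from $y_k$ and keeping their relative order converges in distribution as $k\to\infty$ to $\mathcal{W}((X_1,\dots,X_m,Y_1,\dots,Y_m))$, where $X_1,X_2,\dots$ are i.i.d. with law $\mu$, $Y_1,Y_2,\dots$ are i.i.d. with law $\nu$, and the two sequences are independent.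
   Context: $\mathbb{W}_n$ is the set of words over $\{a,b\}$ with $n$ letters $a$ and $n$ letters $b$, $\mathbb{W}=\bigsqcup_n\mathbb{W}_n$, and $N(w)=n$ for $w\in\mathbb{W}_n$. $\binom{w}{v}$ is the number of occurrences of $v$ as a (not necessarily contiguous) sub-word of $w$. The Markov chain on $\mathbb{W}$ starts at the empty word and, from a word in $\mathbb{W}_n$, inserts a letter $a$ uniformly at random into one of the $2n+1$ slots and then a letter $b$ uniformly into one of the $2n+2$ slots. Its Doob--Martin kernel with reference state the empty word is $K(v,w)=\binom{w}{v}\binom{2m}{m}/\binom{m+n}{m}^2$ for $v\in\mathbb{W}_m$, $w\in\mathbb{W}_{m+n}$ (and $0$ if $N(w)<N(v)$). The Doob--Martin compactification is the closure of $\{K(\cdot,w):w\in\mathbb{W}\}$ in $\mathbb{R}_+^{\mathbb{W}}$ (pointwise convergence): $w_k\to z$ iff $K(v,w_k)\to K(v,z)$ for every $v\in\mathbb{W}$, where $K(\cdot,z)$ is the extended kernel; the boundary consists of the limit points not in $\mathbb{W}$. For $(x_1,\dots,x_n,y_1,\dots,y_n)\in\mathbb{R}^{2n}$ with distinct entries, listing the entries in increasing order as $z_1<\dots<z_{2n}$, $\mathcal{W}((x_1,\dots,x_n,y_1,\dots,y_n))=u_1\cdots u_{2n}\in\mathbb{W}_n$ with $u_i=a$ if $z_i\in\{x_1,\dots,x_n\}$ and $u_i=b$ if $z_i\in\{y_1,\dots,y_n\}$; for $v\in\mathbb{W}_n$, $\mathcal{S}(v):=\mathcal{W}^{-1}(\{v\})\subset\mathbb{R}^{2n}$.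 The boundary point corresponding to $(\mu,\nu)$ is the boundary point $y$ whose extended kernel is $K(w,y)=\binom{2m}{m}\mu^{\otimes m}\otimes\nu^{\otimes m}(\mathcal{S}(w))$ for $w\in\mathbb{W}_m$, $m\in\mathbb{N}_0$. *)

theory Defs
  imports "HOL-Probability.Probability"
begin

text \<open>Words over the alphabet {a,b}: letter a is encoded as True, letter b as False.\<close>
type_synonym word = "bool list"

definition num_a :: "word \<Rightarrow> nat" where
  "num_a w = length (filter id w)"

definition num_b :: "word \<Rightarrow> nat" where
  "num_b w = length (filter Not w)"

definition Wn :: "nat \<Rightarrow> word set" where
  "Wn n = {w. num_a w = n \<and> num_b w = n}"

definition Wall :: "word set" where
  "Wall = {w. num_a w = num_b w}"

definition NN :: "word \<Rightarrow> nat" where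
  "NN w = num_a w"

text \<open>binom(w,v): number of occurrences of v as a (not necessarily contiguous) sub-word of w,
  i.e. number of index sets I of positions of w, |I| = |v|, whose letters read in order give v.\<close>
definition subword_count :: "word \<Rightarrow> word \<Rightarrow> nat" where
  "subword_count w v = card {I. I \<subseteq> {..<length w} \<and> card I = length v
        \<and> map (\<lambda>i. w ! i) (sorted_list_of_set I) = v}"

text \<open>Doob--Martin kernel K(v,w) with reference state the empty word.\<close>
definition DM_kernel :: "word \<Rightarrow> word \<Rightarrow> real" where
  "DM_kernel v w = (if NN w < NN v then 0
     else real (subword_count w v) * real ((2 * NN v) choose (NN v))
          / (real (NN w choose NN v))^2)"

text \<open>Convergence in the Doob--Martin topology of a sequence of words to a point of the
  compactification, the latter represented by its (extended) kernel function h = K(.,y):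
  pointwise convergence K(v, w_k) \<rightarrow> K(v, y) for every v in W.\<close>
definition DM_converges :: "(nat \<Rightarrow> word) \<Rightarrow> (word \<Rightarrow> real) \<Rightarrow> bool" where
  "DM_converges ys h \<longleftrightarrow> (\<forall>v\<in>Wall. (\<lambda>k. DM_kernel v (ys k)) \<longlonglongrightarrow> h v)"

text \<open>The word map \<W>: for x = (x_1..x_m, y_1..y_m) encoded as x 0 .. x (m-1) (the x's) and
  x m .. x (2m-1) (the y's), list the entries in increasing order and record a/b.\<close>
definition word_of :: "nat \<Rightarrow> (nat \<Rightarrow> real) \<Rightarrow> word" where
  "word_of m x = map (\<lambda>z. z \<in> x ` {..<m}) (sorted_list_of_set (x ` {..<2*m}))"

definition prodM :: "real measure \<Rightarrow> real measure \<Rightarrow> nat \<Rightarrow> (nat \<Rightarrow> real) measure" where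
  "prodM \<mu> \<nu> m = PiM {..<2*m} (\<lambda>i. if i < m then \<mu> else \<nu>)"

definition S_set :: "real measure \<Rightarrow> real measure \<Rightarrow> nat \<Rightarrow> word \<Rightarrow> (nat \<Rightarrow> real) set" where
  "S_set \<mu> \<nu> m w = {x \<in> space (prodM \<mu> \<nu> m). inj_on x {..<2*m} \<and> word_of m x = w}"

definition boundary_kernel :: "real measure \<Rightarrow> real measure \<Rightarrow> word \<Rightarrow> real" where
  "boundary_kernel \<mu> \<nu> w =
     real ((2 * NN w) choose (NN w)) * measure (prodM \<mu> \<nu> (NN w)) (S_set \<mu> \<nu> (NN w) w)"

definition random_subword :: "word \<Rightarrow> nat \<Rightarrow> word pmf" where
  "random_subword u m = map_pmf (\<lambda>(A, B). map (\<lambda>i. u ! i) (sorted_list_of_set (A \<union> B)))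
     (pmf_of_set {(A, B). A \<subseteq> {i. i < length u \<and> u ! i} \<and> card A = m
                        \<and> B \<subseteq> {i. i < length u \<and> \<not> u ! i} \<and> card B = m})"

definition limit_word_law :: "real measure \<Rightarrow> real measure \<Rightarrow> nat \<Rightarrow> word measure" where
  "limit_word_law \<mu> \<nu> m = distr (prodM \<mu> \<nu> m) (count_space UNIV) (word_of m)"

text \<open>Convergence in distribution of random words (discrete topology on words):
  expectations of all bounded (necessarily continuous) test functions converge.\<close>
definition conv_in_distr :: "(nat \<Rightarrow> word measure) \<Rightarrow> word measure \<Rightarrow> bool" where
  "conv_in_distr Ms M \<longleftrightarrow> (\<forall>f :: word \<Rightarrow> real. bounded (range f) \<longrightarrow>
      (\<lambda>k. integral\<^sup>L (Ms k) f) \<longlonglongrightarrow> integral\<^sup>L M f)"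

end

theory Submission
  imports Defs
begin



lemma sorted_image_strict_mono:
  fixes S :: "real set" and \<phi> :: "real \<Rightarrow> real"
  assumes "finite S" "strict_mono_on S \<phi>"
  shows "sorted_list_of_set (\<phi> ` S) = map \<phi> (sorted_list_of_set S)"
proof -
  have "sorted_wrt (<) (map \<phi> (sorted_list_of_set S))"
  proof -
    have "sorted_wrt (<) (sorted_list_of_set S)" using assms by simp
    then show ?thesis
      unfolding sorted_wrt_map
      by (rule sorted_wrt_mono_rel[rotated])
         (use assms(2) set_sorted_list_of_set[OF assms(1)] in \<open>auto simp: strict_mono_on_def\<close>)
  qed
  then show ?thesis
    by (metis assms(1) finite_imageI list.set_map set_sorted_list_of_set sorted_list_of_set_unique order.refl
        distinct_card length_map sorted_wrt_map strict_sorted_iff)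
qed

definition rel_of :: "nat \<Rightarrow> (nat \<Rightarrow> real) \<Rightarrow> (nat \<times> nat) set" where
  "rel_of m x = {(i,j). i < 2*m \<and> j < 2*m \<and> x i \<le> x j}"

lemma word_of_rel:
  assumes "rel_of m x = rel_of m y"
  shows "word_of m x = word_of m y"
proof -
  have le: "\<And>i j. i < 2*m \<Longrightarrow> j < 2*m \<Longrightarrow> x i \<le> x j \<longleftrightarrow> y i \<le> y j"
    using assms unfolding rel_of_def set_eq_iff by blast
  have eq: "\<And>i j. i < 2*m \<Longrightarrow> j < 2*m \<Longrightarrow> x i = x j \<longleftrightarrow> y i = y j"
    using le by (metis order.antisym order.refl)
  define \<phi> where "\<phi> z = y (inv_into {..<2*m} x z)" for z
  have phi: "\<And>i. i < 2*m \<Longrightarrow> \<phi> (x i) = y i"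
  proof -
    fix i assume i: "i < 2*m"
    have "inv_into {..<2*m} x (x i) \<in> {..<2*m}" "x (inv_into {..<2*m} x (x i)) = x i"
      using i by (auto intro!: inv_into_into[of _ x "{..<2*m}", simplified] f_inv_into_f)
    then show "\<phi> (x i) = y i" using eq i unfolding \<phi>_def by auto
  qed
  have sm: "strict_mono_on (x ` {..<2*m}) \<phi>"
    unfolding strict_mono_on_def using phi le by (auto simp: not_le[symmetric])
  have img: "y ` {..<2*m} = \<phi> ` x ` {..<2*m}"
    using phi by (force simp: image_iff)
  have mem: "\<And>z. z \<in> x ` {..<2*m} \<Longrightarrow> (\<phi> z \<in> y ` {..<m}) = (z \<in> x ` {..<m})"
  proof -
    fix z assume "z \<in> x ` {..<2*m}"
    then obtain i where i: "i < 2*m" "z = x i" by auto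
    have "(y i \<in> y ` {..<m}) = (x i \<in> x ` {..<m})"
      using eq i by (auto simp: image_iff)
    then show "(\<phi> z \<in> y ` {..<m}) = (z \<in> x ` {..<m})" using phi i by simp
  qed
  show ?thesis
    unfolding word_of_def img sorted_image_strict_mono[OF finite_imageI[OF finite_lessThan] sm]
    using mem by (auto intro!: map_cong)
qed




locale setting =
  fixes \<mu> \<nu> :: "real measure"
  assumes mu_prob: "prob_space \<mu>" and mu_sets: "sets \<mu> = sets borel"
    and nu_prob: "prob_space \<nu>" and nu_sets: "sets \<nu> = sets borel"
    and mu_diffuse: "\<And>x. measure \<mu> {x} = 0" and nu_diffuse: "\<And>x. measure \<nu> {x} = 0"
begin

definition MM :: "nat \<Rightarrow> nat \<Rightarrow> real measure" where
  "MM m i = (if i < m then \<mu> else \<nu>)"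

lemma prodM_eq: "prodM \<mu> \<nu> m = PiM {..<2*m} (MM m)"
  unfolding prodM_def MM_def by simp

lemma MM_prob: "prob_space (MM m i)"
  unfolding MM_def using mu_prob nu_prob by auto

lemma MM_sets: "sets (MM m i) = sets borel"
  unfolding MM_def using mu_sets nu_sets by auto

lemma MM_diffuse: "emeasure (MM m i) {x} = 0"
proof -
  interpret prob_space "MM m i" by (rule MM_prob)
  have "{x} \<in> sets (MM m i)" using MM_sets by simp
  then show ?thesis using mu_diffuse nu_diffuse
      finite_measure.emeasure_eq_measure[OF prob_space.finite_measure[OF mu_prob]]
      finite_measure.emeasure_eq_measure[OF prob_space.finite_measure[OF nu_prob]]
    by (simp add: MM_def)
qed

lemma prodM_prob: "prob_space (prodM \<mu> \<nu> m)"
  unfolding prodM_eq by (rule prob_space_PiM) (rule MM_prob)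

lemma comp_meas: "(\<lambda>x. x i) \<in> borel_measurable (prodM \<mu> \<nu> m)"
proof (cases "i < 2*m")
  case True
  have "(\<lambda>x. x i) \<in> measurable (PiM {..<2*m} (MM m)) (MM m i)"
    using True by (intro measurable_component_singleton) auto
  then show ?thesis unfolding prodM_eq
    by (subst measurable_cong_sets[OF refl MM_sets[symmetric]])
next
  case False
  have "(\<lambda>x. undefined) \<in> borel_measurable (prodM \<mu> \<nu> m)" by simp
  then show ?thesis
    by (rule measurable_cong[THEN iffD1, rotated])
       (use False in \<open>auto simp: prodM_eq space_PiM PiE_def extensional_def\<close>)
qed

declare comp_meas[measurable]

lemma pred_const_bool: "Measurable.pred M (\<lambda>x. c)" by (cases c) (auto simp: pred_def)

lemma rel_of_meas: "rel_of m \<in> measurable (prodM \<mu> \<nu> m) (count_space (Pow ({..<2*m} \<times> {..<2*m})))"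
proof (subst measurable_count_space_eq2, goal_cases)
  case 1 then show ?case by simp
next
  case 2
  have "rel_of m -` {R} \<inter> space (prodM \<mu> \<nu> m) =
      {x \<in> space (prodM \<mu> \<nu> m). \<forall>i\<in>{..<2*m}. \<forall>j\<in>{..<2*m}. (x i \<le> x j) = ((i,j) \<in> R)}"
    if "R \<subseteq> {..<2*m} \<times> {..<2*m}" for R
    using that unfolding rel_of_def by (auto simp: set_eq_iff)
  moreover have "{x \<in> space (prodM \<mu> \<nu> m). \<forall>i\<in>{..<2*m}. \<forall>j\<in>{..<2*m}. (x i \<le> x j) = ((i,j) \<in> R)}
     \<in> sets (prodM \<mu> \<nu> m)" for R
    apply measurable
     apply (simp add: pred_def)
    apply (rule pred_const_bool)
    done
  ultimately show ?case by (auto simp: rel_of_def)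
qed

lemma word_of_meas: "word_of m \<in> measurable (prodM \<mu> \<nu> m) (count_space UNIV)"
proof -
  define F where "F R = word_of m (SOME x. rel_of m x = R)" for R
  have "word_of m x = F (rel_of m x)" for x
    unfolding F_def by (rule word_of_rel) (rule someI_ex[where P="\<lambda>y. rel_of m y = rel_of m x", THEN sym], blast)
  then have "word_of m = F \<circ> rel_of m" by auto
  moreover have "F \<circ> rel_of m \<in> measurable (prodM \<mu> \<nu> m) (count_space UNIV)"
    by (rule measurable_comp[OF rel_of_meas]) simp
  ultimately show ?thesis by simp
qed

lemma diag_null:
  assumes "i < 2*m" "j < 2*m" "i \<noteq> j"
  shows "{x \<in> space (prodM \<mu> \<nu> m). x i = x j} \<in> null_sets (prodM \<mu> \<nu> m)"
proof -
  interpret product_sigma_finite "MM m"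
    unfolding product_sigma_finite_def using MM_prob prob_space_imp_sigma_finite by blast
  let ?I = "{..<2*m} - {i}"
  have ins: "insert i ?I = {..<2*m}" using assms by auto
  let ?A = "{x \<in> space (prodM \<mu> \<nu> m). x i = x j}"
  have A: "?A \<in> sets (prodM \<mu> \<nu> m)"
    by measurable
  have eq: "prodM \<mu> \<nu> m = PiM (insert i ?I) (MM m)" by (simp only: ins prodM_eq)
  have "emeasure (prodM \<mu> \<nu> m) ?A = integral\<^sup>N (PiM (insert i ?I) (MM m)) (indicator ?A)"
    using A unfolding eq by simp
  also have "\<dots> = (\<integral>\<^sup>+ x. (\<integral>\<^sup>+ y. indicator ?A (x(i := y)) \<partial>(MM m i)) \<partial>(PiM ?I (MM m)))"
  proof (rule product_nn_integral_insert)
    have "indicator ?A \<in> borel_measurable (prodM \<mu> \<nu> m)" using A by simp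
    then show "indicator ?A \<in> borel_measurable (PiM (insert i ?I) (MM m))" unfolding eq .
  qed simp_all
  also have "\<dots> = (\<integral>\<^sup>+ x. 0 \<partial>(PiM ?I (MM m)))"
  proof (rule nn_integral_cong)
    fix x assume x: "x \<in> space (PiM ?I (MM m))"
    have "(\<integral>\<^sup>+ y. indicator ?A (x(i := y)) \<partial>(MM m i)) \<le> (\<integral>\<^sup>+ y. indicator {x j} y \<partial>(MM m i))"
      using assms by (intro nn_integral_mono) (auto simp: indicator_def)
    also have "\<dots> = 0" using MM_diffuse MM_sets by simp
    finally show "(\<integral>\<^sup>+ y. indicator ?A (x(i := y)) \<partial>(MM m i)) = 0" by simp
  qed
  finally show ?thesis using A by (simp add: null_sets_def)
qed

lemma noninj_null:
  "{x \<in> space (prodM \<mu> \<nu> m). \<not> inj_on x {..<2*m}} \<in> null_sets (prodM \<mu> \<nu> m)"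
proof -
  have "{x \<in> space (prodM \<mu> \<nu> m). \<not> inj_on x {..<2*m}} =
     (\<Union>p\<in>{p \<in> {..<2*m} \<times> {..<2*m}. fst p \<noteq> snd p}. {x \<in> space (prodM \<mu> \<nu> m). x (fst p) = x (snd p)})"
    unfolding inj_on_def by auto blast
  also have "\<dots> \<in> null_sets (prodM \<mu> \<nu> m)"
    by (rule null_sets.finite_UN) (auto intro!: diag_null)
  finally show ?thesis .
qed

end



lemma count_filter_sorted:
  fixes I :: "'a::linorder set"
  assumes "finite I"
  shows "length (filter P (map f (sorted_list_of_set I))) = card {i\<in>I. P (f i)}"
proof -
  have "length (filter P (map f (sorted_list_of_set I))) = length (filter (P \<circ> f) (sorted_list_of_set I))"
    by (simp add: filter_map)
  also have "\<dots> = card (set (filter (P \<circ> f) (sorted_list_of_set I)))"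
    by (rule distinct_card[symmetric]) simp
  also have "set (filter (P \<circ> f) (sorted_list_of_set I)) = {i\<in>I. P (f i)}"
    using assms by auto
  finally show ?thesis .
qed

lemma length_Wn: "w \<in> Wn m \<Longrightarrow> length w = 2*m"
  using sum_length_filter_compl[of id w] by (simp add: Wn_def num_a_def num_b_def)

lemma card_pos_a: "num_a u = card {i. i < length u \<and> u ! i}"
  unfolding num_a_def by (simp add: length_filter_conv_card)

lemma card_pos_b: "num_b u = card {i. i < length u \<and> \<not> u ! i}"
  unfolding num_b_def by (simp add: length_filter_conv_card)

lemma word_of_Wn:
  assumes "inj_on x {..<2*m}"
  shows "word_of m x \<in> Wn m"
proof -
  let ?S = "x ` {..<2*m}"
  have "num_a (word_of m x) = card {z\<in>?S. z \<in> x ` {..<m}}"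
    unfolding num_a_def word_of_def by (subst count_filter_sorted) auto
  also have "{z\<in>?S. z \<in> x ` {..<m}} = x ` {..<m}" by auto
  also have "card \<dots> = m" using assms by (subst card_image) (auto intro: inj_on_subset)
  finally have a: "num_a (word_of m x) = m" .
  have "num_b (word_of m x) = card {z\<in>?S. \<not> z \<in> x ` {..<m}}"
    unfolding num_b_def word_of_def by (subst count_filter_sorted) (auto simp: comp_def)
  also have "{z\<in>?S. \<not> z \<in> x ` {..<m}} = x ` {m..<2*m}"
  proof (intro equalityI subsetI)
    fix z assume "z \<in> {z\<in>?S. \<not> z \<in> x ` {..<m}}"
    then obtain i where "i < 2*m" "z = x i" "\<not> i < m" by auto
    then show "z \<in> x ` {m..<2*m}" by auto
  next
    fix z assume "z \<in> x ` {m..<2*m}"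
    then obtain i where i: "m \<le> i" "i < 2*m" "z = x i" by auto
    have "\<not> x i \<in> x ` {..<m}"
    proof
      assume "x i \<in> x ` {..<m}"
      then obtain j where "j < m" "x j = x i" by auto
      then show False using assms i unfolding inj_on_def by (metis lessThan_iff not_le less_trans mult_2 trans_less_add1)
    qed
    then show "z \<in> {z\<in>?S. \<not> z \<in> x ` {..<m}}" using i by auto
  qed
  also have "card \<dots> = m" using assms by (subst card_image) (auto intro: inj_on_subset)
  finally show ?thesis using a by (simp add: Wn_def)
qed



definition \<Omega> :: "word \<Rightarrow> nat \<Rightarrow> (nat set \<times> nat set) set" where
  "\<Omega> u m = {(A, B). A \<subseteq> {i. i < length u \<and> u ! i} \<and> card A = m
                        \<and> B \<subseteq> {i. i < length u \<and> \<not> u ! i} \<and> card B = m}"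

definition gw :: "word \<Rightarrow> nat set \<times> nat set \<Rightarrow> word" where
  "gw u = (\<lambda>(A, B). map (\<lambda>i. u ! i) (sorted_list_of_set (A \<union> B)))"

lemma rs_eq: "random_subword u m = map_pmf (gw u) (pmf_of_set (\<Omega> u m))"
  unfolding random_subword_def gw_def \<Omega>_def ..

lemma Omega_prod: "\<Omega> u m = {A. A \<subseteq> {i. i < length u \<and> u ! i} \<and> card A = m}
   \<times> {B. B \<subseteq> {i. i < length u \<and> \<not> u ! i} \<and> card B = m}"
  unfolding \<Omega>_def by auto

lemma Omega_card: "u \<in> Wn n \<Longrightarrow> card (\<Omega> u m) = (n choose m)^2"
  unfolding Omega_prod card_cartesian_product
  by (subst n_subsets, simp)+ (simp add: Wn_def card_pos_a card_pos_b power2_eq_square)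

lemma Omega_finite: "finite (\<Omega> u m)"
  unfolding Omega_prod by (intro finite_cartesian_product) auto

lemma Omega_ne: assumes "u \<in> Wn n" "m \<le> n" shows "\<Omega> u m \<noteq> {}"
proof -
  obtain A where "A \<subseteq> {i. i < length u \<and> u ! i}" "card A = m"
    using assms obtain_subset_with_card_n[of m "{i. i < length u \<and> u ! i}"]
    by (auto simp: Wn_def card_pos_a)
  moreover obtain B where "B \<subseteq> {i. i < length u \<and> \<not> u ! i}" "card B = m"
    using assms obtain_subset_with_card_n[of m "{i. i < length u \<and> \<not> u ! i}"]
    by (auto simp: Wn_def card_pos_b)
  ultimately show ?thesis unfolding \<Omega>_def by auto
qed

lemma fin_sub: "A \<subseteq> {i. i < (l::nat) \<and> P i} \<Longrightarrow> finite A"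
  by (rule finite_subset[of _ "{..<l}"]) auto

lemma gw_Wn: assumes "p \<in> \<Omega> u m" shows "gw u p \<in> Wn m"
proof -
  obtain A B where p: "p = (A,B)" and A: "A \<subseteq> {i. i < length u \<and> u ! i}" "card A = m"
    and B: "B \<subseteq> {i. i < length u \<and> \<not> u ! i}" "card B = m"
    using assms unfolding \<Omega>_def by auto
  have fA: "finite A" "finite B" using A B by (auto intro: fin_sub)
  have "num_a (gw u p) = card {i\<in>A \<union> B. u ! i}"
    unfolding p gw_def num_a_def prod.case using fA by (subst count_filter_sorted) auto
  also have "{i\<in>A \<union> B. u ! i} = A" using A B by auto
  finally have a: "num_a (gw u p) = m" using A by simp
  have "num_b (gw u p) = card {i\<in>A \<union> B. \<not> u ! i}"
    unfolding p gw_def num_b_def prod.case using fA by (subst count_filter_sorted) (auto simp: comp_def)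
  also have "{i\<in>A \<union> B. \<not> u ! i} = B" using A B by auto
  finally show ?thesis using a B by (simp add: Wn_def)
qed



lemma count_eq:
  assumes w: "w \<in> Wn m"
  shows "card {p \<in> \<Omega> u m. gw u p = w} = subword_count u w"
proof -
  let ?Pa = "{i. i < length u \<and> u ! i}" and ?Pb = "{i. i < length u \<and> \<not> u ! i}"
  let ?T = "{I. I \<subseteq> {..<length u} \<and> card I = length w \<and> map (\<lambda>i. u ! i) (sorted_list_of_set I) = w}"
  let ?h = "\<lambda>(A::nat set, B::nat set). A \<union> B"
  have lw: "length w = 2*m" using length_Wn[OF w] .
  have inj: "inj_on ?h {p \<in> \<Omega> u m. gw u p = w}"
  proof (rule inj_onI, clarify)
    fix A B A' B' assume "(A,B) \<in> \<Omega> u m" "(A',B') \<in> \<Omega> u m" and eq: "A \<union> B = A' \<union> B'"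
    then have s: "A \<subseteq> ?Pa" "B \<subseteq> ?Pb" "A' \<subseteq> ?Pa" "B' \<subseteq> ?Pb" unfolding \<Omega>_def by auto
    have "A = (A \<union> B) \<inter> ?Pa" "A' = (A' \<union> B') \<inter> ?Pa" "B = (A \<union> B) \<inter> ?Pb" "B' = (A' \<union> B') \<inter> ?Pb"
      using s by auto
    then show "A = A' \<and> B = B'" using eq by metis
  qed
  have img: "?h ` {p \<in> \<Omega> u m. gw u p = w} = ?T"
  proof (intro equalityI subsetI)
    fix I assume "I \<in> ?h ` {p \<in> \<Omega> u m. gw u p = w}"
    then obtain A B where I: "I = A \<union> B" and AB: "(A,B) \<in> \<Omega> u m" and g: "gw u (A,B) = w" by auto
    from AB have s: "A \<subseteq> ?Pa" "B \<subseteq> ?Pb" "card A = m" "card B = m" unfolding \<Omega>_def by auto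
    have fA: "finite A" "finite B" using s by (auto intro: fin_sub)
    have "card I = 2*m" unfolding I using s fA by (subst card_Un_disjoint) auto
    then show "I \<in> ?T" using s g lw unfolding I gw_def by auto
  next
    fix I assume "I \<in> ?T"
    then have I: "I \<subseteq> {..<length u}" "card I = length w" "map (\<lambda>i. u ! i) (sorted_list_of_set I) = w" by auto
    have fI: "finite I" using I(1) finite_subset by blast
    have ca: "card {i\<in>I. u ! i} = m"
      using count_filter_sorted[OF fI, of id "\<lambda>i. u ! i"] I(3) w by (simp add: Wn_def num_a_def)
    have cb: "card {i\<in>I. \<not> u ! i} = m"
      using count_filter_sorted[OF fI, of Not "\<lambda>i. u ! i"] I(3) w by (simp add: Wn_def num_b_def)
    have "({i\<in>I. u ! i}, {i\<in>I. \<not> u ! i}) \<in> {p \<in> \<Omega> u m. gw u p = w}"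
    proof -
      have un: "{i\<in>I. u ! i} \<union> {i\<in>I. \<not> u ! i} = I" by auto
      have "({i\<in>I. u ! i}, {i\<in>I. \<not> u ! i}) \<in> \<Omega> u m"
        using ca cb I(1) unfolding \<Omega>_def by auto
      moreover have "gw u ({i\<in>I. u ! i}, {i\<in>I. \<not> u ! i}) = w"
        unfolding gw_def prod.case un using I(3) .
      ultimately show ?thesis by simp
    qed
    moreover have "I = ?h ({i\<in>I. u ! i}, {i\<in>I. \<not> u ! i})" by auto
    ultimately show "I \<in> ?h ` {p \<in> \<Omega> u m. gw u p = w}" by blast
  qed
  show ?thesis
    unfolding subword_count_def using card_image[OF inj] img by simp
qed

lemma pmf_rs:
  assumes u: "u \<in> Wn n" and w: "w \<in> Wn m" and mn: "m \<le> n"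
  shows "pmf (random_subword u m) w = real (subword_count u w) / (real (n choose m))^2"
proof -
  have "pmf (random_subword u m) w = measure (pmf_of_set (\<Omega> u m)) (gw u -` {w})"
    unfolding rs_eq pmf_map ..
  also have "\<dots> = real (card (\<Omega> u m \<inter> gw u -` {w})) / real (card (\<Omega> u m))"
    using Omega_finite Omega_ne[OF u mn] by (simp add: measure_pmf_of_set)
  also have "\<Omega> u m \<inter> gw u -` {w} = {p \<in> \<Omega> u m. gw u p = w}" by auto
  finally show ?thesis using count_eq[OF w] Omega_card[OF u] by simp
qed

lemma set_pmf_rs:
  assumes u: "u \<in> Wn n" and mn: "m \<le> n"
  shows "set_pmf (random_subword u m) \<subseteq> Wn m"
  unfolding rs_eq using Omega_finite Omega_ne[OF u mn] gw_Wn by auto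

lemma Wn_finite: "finite (Wn m)"
proof -
  have "Wn m \<subseteq> {xs. set xs \<subseteq> UNIV \<and> length xs = 2*m}" using length_Wn by auto
  then show ?thesis by (rule finite_subset) (intro finite_lists_length_eq, simp)
qed

lemma integral_fin_support:
  fixes M :: "'a measure" and f :: "'a \<Rightarrow> real"
  assumes fin: "finite W" and sets: "sets M = sets (count_space UNIV)" and fm: "finite_measure M"
    and ae: "AE x in M. x \<in> W"
  shows "integral\<^sup>L M f = (\<Sum>w\<in>W. f w * measure M {w})"
proof -
  interpret finite_measure M by (rule fm)
  have "integral\<^sup>L M f = integral\<^sup>L M (\<lambda>x. \<Sum>w\<in>W. f w * indicator {w} x)"
  proof (rule integral_cong_AE)
    show "f \<in> borel_measurable M" "(\<lambda>x. \<Sum>w\<in>W. f w * indicator {w} x) \<in> borel_measurable M"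
      by (simp_all add: measurable_cong_sets[OF sets refl])
    show "AE x in M. f x = (\<Sum>w\<in>W. f w * indicator {w} x)"
      using ae by eventually_elim (auto simp: indicator_def fin if_distrib sum.delta cong: if_cong)
  qed
  also have "\<dots> = (\<Sum>w\<in>W. integral\<^sup>L M (\<lambda>x. f w * indicator {w} x))"
  proof (rule Bochner_Integration.integral_sum)
    fix w assume "w \<in> W"
    have "{w} \<in> sets M" using sets by simp
    then have "integrable M (indicator {w} :: 'a \<Rightarrow> real)"
      by (intro integrable_real_indicator) (simp_all add: less_top[symmetric])
    then show "integrable M (\<lambda>x. f w * indicator {w} x)" by simp
  qed
  also have "\<dots> = (\<Sum>w\<in>W. f w * measure M {w})"
    using sets by (intro sum.cong) auto
  finally show ?thesis .
qed




lemma kk: "m \<le> NN u \<Longrightarrow> NN v = m \<Longrightarrow> DM_kernel v u = real ((2*m) choose m) * (real (subword_count u v) / (real (NN u choose m))^2)"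
  unfolding DM_kernel_def by simp

theorem mainTheorem7:
  fixes ys :: "nat \<Rightarrow> word" and \<mu> \<nu> :: "real measure"
  assumes ys_W: "\<And>k. ys k \<in> Wn (NN (ys k))"
    and N_inf: "filterlim (\<lambda>k. NN (ys k)) at_top sequentially"
    and mu_prob: "prob_space \<mu>" and mu_sets: "sets \<mu> = sets borel"
    and nu_prob: "prob_space \<nu>" and nu_sets: "sets \<nu> = sets borel"
    and mu_supp: "measure \<mu> {0..1} = 1" and nu_supp: "measure \<nu> {0..1} = 1"
    and mu_diffuse: "\<And>x. measure \<mu> {x} = 0" and nu_diffuse: "\<And>x. measure \<nu> {x} = 0"
    and leb: "\<And>A. A \<in> sets borel \<Longrightarrow>
                 (measure \<mu> A + measure \<nu> A) / 2 = measure lborel (A \<inter> {0..1})"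
  shows "(DM_converges ys (boundary_kernel \<mu> \<nu>) \<longleftrightarrow>
           (\<forall>m w. w \<in> Wn m \<longrightarrow>
              (\<lambda>k. real (subword_count (ys k) w) / (real (NN (ys k) choose m))^2)
                \<longlonglongrightarrow> measure (prodM \<mu> \<nu> m) (S_set \<mu> \<nu> m w)))
       \<and> (DM_converges ys (boundary_kernel \<mu> \<nu>) \<longleftrightarrow>
           (\<forall>m. conv_in_distr (\<lambda>k. measure_pmf (random_subword (ys k) m))
                              (limit_word_law \<mu> \<nu> m)))"
proof -
  interpret setting \<mu> \<nu>
    by (rule setting.intro[OF mu_prob mu_sets nu_prob nu_sets mu_diffuse nu_diffuse])
  define r where "r m w k = real (subword_count (ys k) w) / (real (NN (ys k) choose m))^2" for m w k
  define sm where "sm m w = measure (prodM \<mu> \<nu> m) (S_set \<mu> \<nu> m w)" for m w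
  have ev: "eventually (\<lambda>k. m \<le> NN (ys k)) sequentially" for m
    using N_inf by (simp add: filterlim_at_top)
  have NN_Wn: "w \<in> Wn m \<Longrightarrow> NN w = m" for w m by (simp add: Wn_def NN_def)
  have Wall_iff: "v \<in> Wall \<longleftrightarrow> v \<in> Wn (NN v)" for v by (auto simp: Wall_def Wn_def NN_def)
  have Cpos: "real ((2*m) choose m) > 0" for m by simp
  have kern: "eventually (\<lambda>k. DM_kernel v (ys k) = real ((2*m) choose m) * r m v k) sequentially"
    if "v \<in> Wn m" for v m
    using ev[of m] proof eventually_elim
    case (elim k)
    show ?case unfolding r_def by (rule kk[OF elim NN_Wn[OF that]])
  qed
  have bk: "boundary_kernel \<mu> \<nu> v = real ((2*m) choose m) * sm m v" if "v \<in> Wn m" for v m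
    using NN_Wn[OF that] by (simp add: boundary_kernel_def sm_def)
  have cond1_iff: "(r m v \<longlonglongrightarrow> sm m v) \<longleftrightarrow> ((\<lambda>k. DM_kernel v (ys k)) \<longlonglongrightarrow> boundary_kernel \<mu> \<nu> v)"
    if v: "v \<in> Wn m" for v m
  proof -
    have "((\<lambda>k. DM_kernel v (ys k)) \<longlonglongrightarrow> boundary_kernel \<mu> \<nu> v) \<longleftrightarrow>
          ((\<lambda>k. real ((2*m) choose m) * r m v k) \<longlonglongrightarrow> real ((2*m) choose m) * sm m v)"
      using tendsto_cong[OF kern[OF v]] bk[OF v] by simp
    also have "\<dots> \<longleftrightarrow> (r m v \<longlonglongrightarrow> sm m v)"
    proof
      assume "(\<lambda>k. real ((2*m) choose m) * r m v k) \<longlonglongrightarrow> real ((2*m) choose m) * sm m v"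
      then have "(\<lambda>k. inverse (real ((2*m) choose m)) * (real ((2*m) choose m) * r m v k))
          \<longlonglongrightarrow> inverse (real ((2*m) choose m)) * (real ((2*m) choose m) * sm m v)"
        by (rule tendsto_mult_left)
      then show "r m v \<longlonglongrightarrow> sm m v" using Cpos[of m] by (simp add: field_simps)
    next
      assume "r m v \<longlonglongrightarrow> sm m v"
      then show "(\<lambda>k. real ((2*m) choose m) * r m v k) \<longlonglongrightarrow> real ((2*m) choose m) * sm m v"
        by (rule tendsto_mult_left)
    qed
    finally show ?thesis by simp
  qed
  have part1: "DM_converges ys (boundary_kernel \<mu> \<nu>) \<longleftrightarrow> (\<forall>m w. w \<in> Wn m \<longrightarrow> r m w \<longlonglongrightarrow> sm m w)"
  proof
    assume dm: "DM_converges ys (boundary_kernel \<mu> \<nu>)"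
    show "\<forall>m w. w \<in> Wn m \<longrightarrow> r m w \<longlonglongrightarrow> sm m w"
    proof (intro allI impI)
      fix m w assume w: "w \<in> Wn m"
      then have "w \<in> Wall" using Wall_iff NN_Wn by simp
      then show "r m w \<longlonglongrightarrow> sm m w" using dm cond1_iff[OF w] unfolding DM_converges_def by blast
    qed
  next
    assume c: "\<forall>m w. w \<in> Wn m \<longrightarrow> r m w \<longlonglongrightarrow> sm m w"
    show "DM_converges ys (boundary_kernel \<mu> \<nu>)" unfolding DM_converges_def
    proof
      fix v assume "v \<in> Wall"
      then have v: "v \<in> Wn (NN v)" using Wall_iff by simp
      then show "(\<lambda>k. DM_kernel v (ys k)) \<longlonglongrightarrow> boundary_kernel \<mu> \<nu> v"
        using c cond1_iff[OF v] by blast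
    qed
  qed

  have wm: "word_of m \<in> measurable (prodM \<mu> \<nu> m) (count_space UNIV)" for m
    by (rule word_of_meas)
  have Qprob: "prob_space (limit_word_law \<mu> \<nu> m)" for m
    unfolding limit_word_law_def by (rule prob_space.prob_space_distr[OF prodM_prob wm])
  have Qsets: "sets (limit_word_law \<mu> \<nu> m) = sets (count_space UNIV)" for m
    unfolding limit_word_law_def by simp
  have Qsingle: "measure (limit_word_law \<mu> \<nu> m) {w} = sm m w" for m w
  proof -
    have "measure (limit_word_law \<mu> \<nu> m) {w} =
        measure (prodM \<mu> \<nu> m) (word_of m -` {w} \<inter> space (prodM \<mu> \<nu> m))"
      unfolding limit_word_law_def by (rule measure_distr[OF wm]) simp
    also have "\<dots> = measure (prodM \<mu> \<nu> m) (word_of m -` {w} \<inter> space (prodM \<mu> \<nu> m)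
          - {x \<in> space (prodM \<mu> \<nu> m). \<not> inj_on x {..<2*m}})"
      by (rule measure_Diff_null_set[symmetric]) (use wm noninj_null in \<open>auto simp: measurable_def\<close>)
    also have "word_of m -` {w} \<inter> space (prodM \<mu> \<nu> m)
          - {x \<in> space (prodM \<mu> \<nu> m). \<not> inj_on x {..<2*m}} = S_set \<mu> \<nu> m w"
      unfolding S_set_def by auto
    finally show ?thesis unfolding sm_def .
  qed
  have QAE: "AE x in limit_word_law \<mu> \<nu> m. x \<in> Wn m" for m
  proof -
    have "AE x in prodM \<mu> \<nu> m. word_of m x \<in> Wn m"
      by (rule AE_I'[OF noninj_null]) (auto intro: word_of_Wn)
    then show ?thesis unfolding limit_word_law_def by (subst AE_distr_iff[OF wm]) simp_all
  qed
  have Pfin: "finite_measure (measure_pmf p)" for p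
    by (rule prob_space.finite_measure) (rule prob_space_measure_pmf)
  have Psingle: "eventually (\<lambda>k. measure (measure_pmf (random_subword (ys k) m)) {w} = r m w k) sequentially"
    if "w \<in> Wn m" for m w
    using ev[of m] proof eventually_elim
    case (elim k)
    then show ?case using pmf_rs[OF ys_W that elim] by (simp add: measure_pmf_single r_def)
  qed
  have PAE: "eventually (\<lambda>k. AE x in measure_pmf (random_subword (ys k) m). x \<in> Wn m) sequentially" for m
    using ev[of m] proof eventually_elim
    case (elim k)
    then show ?case using set_pmf_rs[OF ys_W elim] by (auto simp: AE_measure_pmf_iff)
  qed
  have cd: "conv_in_distr (\<lambda>k. measure_pmf (random_subword (ys k) m)) (limit_word_law \<mu> \<nu> m)
      \<longleftrightarrow> (\<forall>w. w \<in> Wn m \<longrightarrow> r m w \<longlonglongrightarrow> sm m w)" for m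
  proof
    assume c: "conv_in_distr (\<lambda>k. measure_pmf (random_subword (ys k) m)) (limit_word_law \<mu> \<nu> m)"
    show "\<forall>w. w \<in> Wn m \<longrightarrow> r m w \<longlonglongrightarrow> sm m w"
    proof (intro allI impI)
      fix w assume w: "w \<in> Wn m"
      have "bounded (range (indicator {w} :: word \<Rightarrow> real))"
      proof (rule boundedI[where B=1])
        fix x assume "x \<in> range (indicator {w} :: word \<Rightarrow> real)"
        then obtain y where "x = indicator {w} y" by blast
        then show "norm x \<le> 1" by (simp add: indicator_def)
      qed
      then have "(\<lambda>k. integral\<^sup>L (measure_pmf (random_subword (ys k) m)) (indicator {w} :: word \<Rightarrow> real))
          \<longlonglongrightarrow> integral\<^sup>L (limit_word_law \<mu> \<nu> m) (indicator {w} :: word \<Rightarrow> real)"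
        using c unfolding conv_in_distr_def by (elim allE[where x="indicator {w}"] impE)
      moreover have "space (limit_word_law \<mu> \<nu> m) = UNIV"
        using sets_eq_imp_space_eq[OF Qsets] by simp
      ultimately have "(\<lambda>k. measure (measure_pmf (random_subword (ys k) m)) {w}) \<longlonglongrightarrow> sm m w"
        using Qsingle[of m w] by simp
      then show "r m w \<longlonglongrightarrow> sm m w"
        using tendsto_cong[OF Psingle[OF w]] by (simp only:)
    qed
  next
    assume c: "\<forall>w. w \<in> Wn m \<longrightarrow> r m w \<longlonglongrightarrow> sm m w"
    show "conv_in_distr (\<lambda>k. measure_pmf (random_subword (ys k) m)) (limit_word_law \<mu> \<nu> m)"
      unfolding conv_in_distr_def
    proof (intro allI impI)
      fix f :: "word \<Rightarrow> real"
      have Qint: "integral\<^sup>L (limit_word_law \<mu> \<nu> m) f = (\<Sum>w\<in>Wn m. f w * sm m w)"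
        using integral_fin_support[OF Wn_finite Qsets prob_space.finite_measure[OF Qprob] QAE]
        by (simp add: Qsingle)
      have e: "eventually (\<lambda>k. integral\<^sup>L (measure_pmf (random_subword (ys k) m)) f
          = (\<Sum>w\<in>Wn m. f w * r m w k)) sequentially"
      proof -
        have e2: "eventually (\<lambda>k. \<forall>w\<in>Wn m. measure (measure_pmf (random_subword (ys k) m)) {w} = r m w k) sequentially"
          using Psingle by (intro eventually_ball_finite[OF Wn_finite]) auto
        show ?thesis using PAE[of m] e2
        proof eventually_elim
          case (elim k)
          then show ?case
            by (subst integral_fin_support[OF Wn_finite _ Pfin elim(1)]) simp_all
        qed
      qed
      have lim: "(\<lambda>k. \<Sum>w\<in>Wn m. f w * r m w k) \<longlonglongrightarrow> (\<Sum>w\<in>Wn m. f w * sm m w)"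
        using c by (intro tendsto_sum tendsto_mult_left) auto
      show "(\<lambda>k. integral\<^sup>L (measure_pmf (random_subword (ys k) m)) f)
          \<longlonglongrightarrow> integral\<^sup>L (limit_word_law \<mu> \<nu> m) f"
        unfolding Qint tendsto_cong[OF e] by (rule lim)
    qed
  qed
  have g1: "DM_converges ys (boundary_kernel \<mu> \<nu>) \<longleftrightarrow>
           (\<forall>m w. w \<in> Wn m \<longrightarrow>
              (\<lambda>k. real (subword_count (ys k) w) / (real (NN (ys k) choose m))^2)
                \<longlonglongrightarrow> measure (prodM \<mu> \<nu> m) (S_set \<mu> \<nu> m w))"
    using part1 unfolding r_def sm_def .
  have g2: "(\<forall>m. conv_in_distr (\<lambda>k. measure_pmf (random_subword (ys k) m)) (limit_word_law \<mu> \<nu> m))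
     \<longleftrightarrow> (\<forall>m w. w \<in> Wn m \<longrightarrow> r m w \<longlonglongrightarrow> sm m w)"
    by (simp only: cd)
  show ?thesis using g1 g2 part1 by (simp only:)
qed


end
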